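(* Let $(X,\rho)$ be a finite metric space, $W\subseteq X$, $T\subseteq X$ nonempty, $z>0$, and let $\mathcal{B}=(\mathcal{B}(1),\ldots,\mathcal{B}(L))$ be a $z$-linear bin division of $W$ with respect to $T$. Let $A\subseteq W$ and $r\in(0,1)$. If $|\mathcal{B}(i)\cap A|/|\mathcal{B}(i)|\le r$ for all $i\in[L]$, then $$R(A\setminus\mathcal{B}(1),T)\le \tfrac32\, r\, R(W,T).$$
   Context: $\rho(x,T):=\min_{y\in T}\rho(x,y)$ and $R(S,T):=\sum_{x\in S}\rho(x,T)$. A $z$-linear bin division of $W$ with respect to $T$ is a partition $\mathcal{B}=(\mathcal{B}(1),\ldots,\mathcal{B}(L))$ of $W$ such that: (1) if $z\le |W|$ then $|\mathcal{B}(i)|\ge z(i+1)/2$ for all $i\in[L]$; otherwise ($|W|<z$) the division is trivial, $\mathcal{B}(1):=W$; (2) $|\mathcal{B}(1)|\le\frac52 z$; (3) $|\mathcal{B}(i+1)|/|\mathcal{B}(i)|\le 3/2$ for $i\in[L-1]$; (4) for $i\in[L-1]$, $x\in\mathcal{B}(i)$, $x'\in\mathcal{B}(i+1)$: $\rho(x,T)\ge\rho(x',T)$. *)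

theory Defs
  imports Complex_Main
begin

definition metric_on :: "'a set \<Rightarrow> ('a \<Rightarrow> 'a \<Rightarrow> real) \<Rightarrow> bool" where
  "metric_on X \<rho> \<longleftrightarrow>
     (\<forall>x\<in>X. \<forall>y\<in>X. \<rho> x y \<ge> 0 \<and> (\<rho> x y = 0 \<longleftrightarrow> x = y) \<and> \<rho> x y = \<rho> y x) \<and>
     (\<forall>x\<in>X. \<forall>y\<in>X. \<forall>w\<in>X. \<rho> x w \<le> \<rho> x y + \<rho> y w)"

definition dist_set :: "('a \<Rightarrow> 'a \<Rightarrow> real) \<Rightarrow> 'a \<Rightarrow> 'a set \<Rightarrow> real" where
  "dist_set \<rho> x T = Min ((\<lambda>y. \<rho> x y) ` T)"

definition cost :: "('a \<Rightarrow> 'a \<Rightarrow> real) \<Rightarrow> 'a set \<Rightarrow> 'a set \<Rightarrow> real" where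
  "cost \<rho> S T = (\<Sum>x\<in>S. dist_set \<rho> x T)"

definition linear_bin_division ::
  "('a \<Rightarrow> 'a \<Rightarrow> real) \<Rightarrow> real \<Rightarrow> 'a set \<Rightarrow> 'a set \<Rightarrow> (nat \<Rightarrow> 'a set) \<Rightarrow> nat \<Rightarrow> bool" where
  "linear_bin_division \<rho> z W T B L \<longleftrightarrow>
     \<comment> \<open>partition of W\<close>
     1 \<le> L \<and> (\<Union>i\<in>{1..L}. B i) = W \<and>
     (\<forall>i\<in>{1..L}. \<forall>j\<in>{1..L}. i \<noteq> j \<longrightarrow> B i \<inter> B j = {}) \<and>
     \<comment> \<open>(1)\<close>
     (if z \<le> real (card W)
      then (\<forall>i\<in>{1..L}. real (card (B i)) \<ge> z * (real i + 1) / 2)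
      else L = 1 \<and> B 1 = W) \<and>
     \<comment> \<open>(2)\<close>
     real (card (B 1)) \<le> 5/2 * z \<and>
     \<comment> \<open>(3)\<close>
     (\<forall>i\<in>{1..<L}. real (card (B (i+1))) / real (card (B i)) \<le> 3/2) \<and>
     \<comment> \<open>(4)\<close>
     (\<forall>i\<in>{1..<L}. \<forall>x\<in>B i. \<forall>x'\<in>B (i+1). dist_set \<rho> x T \<ge> dist_set \<rho> x' T)"

end

theory Submission
  imports Defs
begin

theorem lemma6:
  fixes X W T A :: "'a set" and \<rho> :: "'a \<Rightarrow> 'a \<Rightarrow> real"
    and z r :: real and B :: "nat \<Rightarrow> 'a set" and L :: nat
  assumes "finite X" and "metric_on X \<rho>"
    and "W \<subseteq> X" and "T \<subseteq> X" and "T \<noteq> {}"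
    and "z > 0"
    and "linear_bin_division \<rho> z W T B L"
    and "A \<subseteq> W"
    and "0 < r" and "r < 1"
    and "\<forall>i\<in>{1..L}. real (card (B i \<inter> A)) / real (card (B i)) \<le> r"
  shows "cost \<rho> (A - B 1) T \<le> 3/2 * r * cost \<rho> W T"
proof -
  define d where "d x = dist_set \<rho> x T" for x
  note LB = assms(7)[unfolded linear_bin_division_def, folded d_def]
  have D1: "1 \<le> L" using LB by (elim conjE) assumption
  have D2: "(\<Union>i\<in>{1..L}. B i) = W" using LB by (elim conjE) assumption
  have D3: "\<forall>i\<in>{1..L}. \<forall>j\<in>{1..L}. i \<noteq> j \<longrightarrow> B i \<inter> B j = {}" using LB by (elim conjE) assumption
  have D4: "if z \<le> real (card W)
      then (\<forall>i\<in>{1..L}. real (card (B i)) \<ge> z * (real i + 1) / 2)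
      else L = 1 \<and> B 1 = W" using LB by (elim conjE) assumption
  have D5: "\<forall>i\<in>{1..<L}. real (card (B (i+1))) / real (card (B i)) \<le> 3/2" using LB by (elim conjE) assumption
  have D6: "\<forall>i\<in>{1..<L}. \<forall>x\<in>B i. \<forall>x'\<in>B (i+1). d x \<ge> d x'" using LB by (elim conjE) assumption
  have D3': "\<And>i j x. i \<in> {1..L} \<Longrightarrow> j \<in> {1..L} \<Longrightarrow> i \<noteq> j \<Longrightarrow> x \<in> B i \<Longrightarrow> x \<in> B j \<Longrightarrow> False"
    using D3 by blast
  note D = D1 D2 D3 D4 D5 D6
  have finW: "finite W" using assms(1,3) finite_subset by blast
  have finT: "finite T" using assms(1,4) finite_subset by blast
  have BW: "i \<in> {1..L} \<Longrightarrow> B i \<subseteq> W" for i using D(2) by blast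
  have finB: "i \<in> {1..L} \<Longrightarrow> finite (B i)" for i using BW finW finite_subset by blast
  have dnn: "x \<in> W \<Longrightarrow> d x \<ge> 0" for x
  proof -
    assume "x \<in> W"
    hence "x \<in> X" using assms(3) by blast
    have "\<forall>y\<in>T. \<rho> x y \<ge> 0" using assms(2,4) \<open>x \<in> X\<close> unfolding metric_on_def by blast
    thus ?thesis unfolding d_def dist_set_def using finT assms(5) by (simp add: Min_ge_iff)
  qed
  have costW: "cost \<rho> S T = (\<Sum>x\<in>S. d x)" for S unfolding cost_def d_def by simp
  show ?thesis
  proof (cases "L = 1")
    case True
    have e: "A - B 1 = {}" using D(2) True assms(8) by auto
    have c0: "cost \<rho> (A - B 1) T = 0" unfolding cost_def e by simp
    have "cost \<rho> W T \<ge> 0" unfolding costW using dnn by (simp add: sum_nonneg)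
    thus ?thesis unfolding c0 using assms(9) by simp
  next
    case False
    hence L2: "L \<ge> 2" using D(1) by simp
    have zc: "z \<le> real (card W)" using D(4) False by (auto split: if_splits)
    hence cardpos: "i \<in> {1..L} \<Longrightarrow> card (B i) > 0" for i
    proof -
      assume i: "i \<in> {1..L}"
      have "real (card (B i)) \<ge> z * (real i + 1) / 2" using D(4) zc i by simp
      moreover have "z * (real i + 1) / 2 > 0" using assms(6) by simp
      ultimately show ?thesis by linarith
    qed
    have step: "(\<Sum>x\<in>B i \<inter> A. d x) \<le> 3/2 * r * (\<Sum>x\<in>B (i-1). d x)" if i: "i \<in> {2..L}" for i
    proof -
      let ?j = "i - 1"
      have j: "?j \<in> {1..<L}" "?j \<in> {1..L}" "?j + 1 = i" using i by auto
      have ii: "i \<in> {1..L}" using i by auto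
      have fj: "finite (B ?j)" and nj: "B ?j \<noteq> {}" using finB[OF j(2)] cardpos[OF j(2)] by auto
      define m where "m = Min (d ` B ?j)"
      have mle: "x' \<in> B ?j \<Longrightarrow> m \<le> d x'" for x' unfolding m_def using fj by simp
      have m0: "m \<ge> 0" unfolding m_def using fj nj dnn BW[OF j(2)] by (auto simp: Min_ge_iff)
      have dm: "x \<in> B i \<Longrightarrow> d x \<le> m" for x
      proof -
        assume x: "x \<in> B i"
        have "m \<in> d ` B ?j" unfolding m_def using fj nj by simp
        then obtain x' where "x' \<in> B ?j" "m = d x'" by blast
        thus ?thesis using D(6) j(1) x j(3) by force
      qed
      have c1: "(\<Sum>x\<in>B i \<inter> A. d x) \<le> real (card (B i \<inter> A)) * m"
        using sum_bounded_above[of "B i \<inter> A" d m] dm by auto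
      have "real (card (B i \<inter> A)) / real (card (B i)) \<le> r" using assms(11) ii by blast
      hence c2: "real (card (B i \<inter> A)) \<le> r * real (card (B i))"
        using cardpos[OF ii] by (simp add: divide_le_eq)
      have "real (card (B i)) / real (card (B ?j)) \<le> 3/2" using D(5) j by fastforce
      hence c3: "real (card (B i)) \<le> 3/2 * real (card (B ?j))"
        using cardpos[OF j(2)] by (simp add: divide_le_eq)
      have c4: "real (card (B ?j)) * m \<le> (\<Sum>x\<in>B ?j. d x)"
        using sum_bounded_below[of "B ?j" m d] mle by auto
      have "(\<Sum>x\<in>B i \<inter> A. d x) \<le> r * real (card (B i)) * m"
        using c1 c2 m0 by (meson mult_right_mono order_trans)
      also have "\<dots> \<le> r * (3/2 * real (card (B ?j))) * m"
        using c3 m0 assms(9) by (intro mult_right_mono mult_left_mono) auto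
      also have "\<dots> = 3/2 * r * (real (card (B ?j)) * m)" by simp
      also have "\<dots> \<le> 3/2 * r * (\<Sum>x\<in>B ?j. d x)"
        using c4 assms(9) by (intro mult_left_mono) auto
      finally show ?thesis .
    qed
    have AU: "A - B 1 = (\<Union>i\<in>{2..L}. B i \<inter> A)"
    proof
      show "A - B 1 \<subseteq> (\<Union>i\<in>{2..L}. B i \<inter> A)"
      proof
        fix x assume x: "x \<in> A - B 1"
        then obtain i where "i \<in> {1..L}" "x \<in> B i" using D(2) assms(8) by blast
        moreover have "i \<noteq> 1" using x calculation by auto
        ultimately show "x \<in> (\<Union>i\<in>{2..L}. B i \<inter> A)" using x by auto
      qed
      show "(\<Union>i\<in>{2..L}. B i \<inter> A) \<subseteq> A - B 1"
      proof
        fix x assume "x \<in> (\<Union>i\<in>{2..L}. B i \<inter> A)"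
        then obtain i where i: "i \<in> {2..L}" "x \<in> B i" "x \<in> A" by blast
        have "B i \<inter> B 1 = {}" using D(3) i(1) by auto
        thus "x \<in> A - B 1" using i by auto
      qed
    qed
    have "cost \<rho> (A - B 1) T = (\<Sum>i\<in>{2..L}. (\<Sum>x\<in>B i \<inter> A. d x))"
      unfolding costW AU
    proof (rule sum.UNION_disjoint)
      show "\<forall>i\<in>{2..L}. finite (B i \<inter> A)" using finB by auto
      show "\<forall>i\<in>{2..L}. \<forall>j\<in>{2..L}. i \<noteq> j \<longrightarrow> B i \<inter> A \<inter> (B j \<inter> A) = {}"
      proof (intro ballI impI)
        fix i j assume "i \<in> {2..L}" "j \<in> {2..L}" "i \<noteq> j"
        thus "B i \<inter> A \<inter> (B j \<inter> A) = {}" using D3'[of i j] by auto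
      qed
    qed simp
    also have "\<dots> \<le> (\<Sum>i\<in>{2..L}. 3/2 * r * (\<Sum>x\<in>B (i-1). d x))"
      by (rule sum_mono) (rule step)
    also have "\<dots> = 3/2 * r * (\<Sum>i\<in>{2..L}. (\<Sum>x\<in>B (i-1). d x))"
      by (simp add: sum_distrib_left)
    also have "(\<Sum>i\<in>{2..L}. (\<Sum>x\<in>B (i-1). d x)) = (\<Sum>j\<in>{1..L-1}. (\<Sum>x\<in>B j. d x))"
      by (rule sum.reindex_bij_witness[where i="\<lambda>j. j+1" and j="\<lambda>i. i-1"]) auto
    also have "\<dots> \<le> (\<Sum>j\<in>{1..L}. (\<Sum>x\<in>B j. d x))"
      by (rule sum_mono2) (use dnn BW in \<open>auto intro!: sum_nonneg\<close>)
    also have "(\<Sum>j\<in>{1..L}. (\<Sum>x\<in>B j. d x)) = cost \<rho> W T"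
      unfolding costW D(2)[symmetric]
    proof (rule sum.UNION_disjoint[symmetric])
      show "\<forall>i\<in>{1..L}. finite (B i)" using finB by auto
      show "\<forall>i\<in>{1..L}. \<forall>j\<in>{1..L}. i \<noteq> j \<longrightarrow> B i \<inter> B j = {}" using D3 .
    qed simp
    finally show ?thesis using assms(9) by simp
  qed
qed

end
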